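(* Let $\mathbb{F}$ be an infinite field with $\operatorname{char}(\mathbb{F})\neq 2$, let $G$ be a group with a group involution $\ast$ and a non-trivial orientation $\sigma$ such that $gg^\ast\in N=\ker\sigma$ for all $g\in G$, and let $\circledast$ be the associated oriented involution of $\mathbb{F}G$. Assume $\mathbb{F}G$ is normal with respect to $\circledast$, and let $g,h\in G$ with $gh\neq hg$. (1) If either $\sigma(g)=\sigma(h)=1$, or $\sigma(g)=-1$ and $\sigma(h)=1$, then $g^2h=hg^2$. (2) If either $\sigma(g)=1$ and $\sigma(h)=-1$, or $\sigma(g)=\sigma(h)=-1$, then $g^2h=(g^2h)^\ast$. In particular, $(m^2,n)=1$ for all $m,n\in N$.
   Context: A group involution on $G$ is a map $\ast:G\to G$ with $(gh)^\ast=h^\ast g^\ast$ and $(g^\ast)^\ast=g$. An orientation is a group homomorphism $\sigma:G\to\{\pm1\}$. The oriented involution is $(\sum_g\alpha_g g)^\circledast=\sum_g\alpha_g\sigma(g)g^\ast$ on $\mathbb{F}G$. $\mathbb{F}G$ is normal if $\alpha\alpha^\circledast=\alpha^\circledast\alpha$ for all $\alpha\in\mathbb{F}G$. $(x,y)=x^{-1}y^{-1}xy$. *)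

theory Defs
  imports "HOL-Algebra.Group"
begin

definition group_involution :: "('g,'m) monoid_scheme \<Rightarrow> ('g \<Rightarrow> 'g) \<Rightarrow> bool" where
  "group_involution G s \<longleftrightarrow>
     (\<forall>x\<in>carrier G. s x \<in> carrier G) \<and>
     (\<forall>x\<in>carrier G. \<forall>y\<in>carrier G. s (x \<otimes>\<^bsub>G\<^esub> y) = s y \<otimes>\<^bsub>G\<^esub> s x) \<and>
     (\<forall>x\<in>carrier G. s (s x) = x)"

definition orientation :: "('g,'m) monoid_scheme \<Rightarrow> ('g \<Rightarrow> int) \<Rightarrow> bool" where
  "orientation G \<sigma> \<longleftrightarrow>
     (\<forall>x\<in>carrier G. \<sigma> x \<in> {1, -1}) \<and>
     (\<forall>x\<in>carrier G. \<forall>y\<in>carrier G. \<sigma> (x \<otimes>\<^bsub>G\<^esub> y) = \<sigma> x * \<sigma> y)"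

text \<open>Elements of the group algebra FG: finitely supported functions on the carrier.\<close>
definition gr_elem :: "('g,'m) monoid_scheme \<Rightarrow> ('g \<Rightarrow> 'f::zero) \<Rightarrow> bool" where
  "gr_elem G a \<longleftrightarrow> finite {x\<in>carrier G. a x \<noteq> 0} \<and> (\<forall>x. x \<notin> carrier G \<longrightarrow> a x = 0)"

definition gr_mult :: "('g,'m) monoid_scheme \<Rightarrow> ('g \<Rightarrow> 'f::ring_1) \<Rightarrow> ('g \<Rightarrow> 'f) \<Rightarrow> 'g \<Rightarrow> 'f" where
  "gr_mult G a b = (\<lambda>x. if x \<in> carrier G then
      (\<Sum>(y,z)\<in>{(y,z). y \<in> carrier G \<and> z \<in> carrier G \<and> a y \<noteq> 0 \<and> b z \<noteq> 0 \<and> y \<otimes>\<^bsub>G\<^esub> z = x}.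
          a y * b z)
    else 0)"

text \<open>Oriented involution: (\<Sum> a_g g) maps to \<Sum> a_g \<sigma>(g) g*, so the coefficient at x is
  \<sigma>(x*) a(x*).\<close>
definition oriented_inv :: "('g,'m) monoid_scheme \<Rightarrow> ('g \<Rightarrow> 'g) \<Rightarrow> ('g \<Rightarrow> int) \<Rightarrow> ('g \<Rightarrow> 'f::ring_1) \<Rightarrow> 'g \<Rightarrow> 'f" where
  "oriented_inv G s \<sigma> a = (\<lambda>x. if x \<in> carrier G then of_int (\<sigma> (s x)) * a (s x) else 0)"

definition gr_normal :: "('g,'m) monoid_scheme \<Rightarrow> ('g \<Rightarrow> 'g) \<Rightarrow> ('g \<Rightarrow> int) \<Rightarrow> 'f::ring_1 itself \<Rightarrow> bool" where
  "gr_normal G s \<sigma> _ \<longleftrightarrow>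
     (\<forall>a :: 'g \<Rightarrow> 'f. gr_elem G a \<longrightarrow>
        gr_mult G a (oriented_inv G s \<sigma> a) = gr_mult G (oriented_inv G s \<sigma> a) a)"

end

theory Submission
  imports Defs
begin

definition sc :: "'f::zero \<Rightarrow> 'g \<Rightarrow> 'g \<Rightarrow> 'f" where
  "sc c x = (\<lambda>z. if z = x then c else 0)"

lemma gr_mult_expand:
  fixes a b :: "'g \<Rightarrow> 'f::ring_1"
  assumes "finite A" "finite B" "A \<subseteq> carrier G" "B \<subseteq> carrier G"
    "\<And>y. a y \<noteq> 0 \<Longrightarrow> y \<in> A" "\<And>w. b w \<noteq> 0 \<Longrightarrow> w \<in> B"
  shows "gr_mult G a b z = (if z \<in> carrier G then
     (\<Sum>y\<in>A. \<Sum>w\<in>B. if y \<otimes>\<^bsub>G\<^esub> w = z then a y * b w else 0) else 0)"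
proof (cases "z \<in> carrier G")
  case True
  let ?S = "{(y,w). y \<in> carrier G \<and> w \<in> carrier G \<and> a y \<noteq> 0 \<and> b w \<noteq> 0 \<and> y \<otimes>\<^bsub>G\<^esub> w = z}"
  have sub: "?S \<subseteq> A \<times> B" using assms by auto
  have "(\<Sum>(y,w)\<in>?S. a y * b w) = (\<Sum>(y,w)\<in>A\<times>B. if y \<otimes>\<^bsub>G\<^esub> w = z then a y * b w else 0)"
    by (rule sum.mono_neutral_cong_left) (use assms sub in \<open>auto split: if_splits\<close>)
  also have "\<dots> = (\<Sum>y\<in>A. \<Sum>w\<in>B. if y \<otimes>\<^bsub>G\<^esub> w = z then a y * b w else 0)"
    by (simp add: sum.cartesian_product)
  finally show ?thesis using True by (simp add: gr_mult_def)
qed (simp add: gr_mult_def)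

lemma gr_elem_supp:
  assumes "gr_elem G a" shows "finite {x\<in>carrier G. a x \<noteq> 0}" "\<And>y. a y \<noteq> 0 \<Longrightarrow> y \<in> {x\<in>carrier G. a x \<noteq> 0}"
  using assms unfolding gr_elem_def by auto

lemma gm_add_left:
  fixes a1 a2 b :: "'g \<Rightarrow> 'f::ring_1"
  assumes "gr_elem G a1" "gr_elem G a2" "gr_elem G b"
  shows "gr_mult G (\<lambda>z. a1 z + a2 z) b = (\<lambda>z. gr_mult G a1 b z + gr_mult G a2 b z)"
proof
  fix z
  let ?A = "{x\<in>carrier G. a1 x \<noteq> 0} \<union> {x\<in>carrier G. a2 x \<noteq> 0}"
  let ?B = "{x\<in>carrier G. b x \<noteq> 0}"
  have fA: "finite ?A" and fB: "finite ?B" using assms gr_elem_supp by blast+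
  have e1: "gr_mult G a1 b z = (if z \<in> carrier G then
     (\<Sum>y\<in>?A. \<Sum>w\<in>?B. if y \<otimes>\<^bsub>G\<^esub> w = z then a1 y * b w else 0) else 0)"
    by (rule gr_mult_expand[OF fA fB]) (use assms in \<open>auto simp: gr_elem_def\<close>)
  have e2: "gr_mult G a2 b z = (if z \<in> carrier G then
     (\<Sum>y\<in>?A. \<Sum>w\<in>?B. if y \<otimes>\<^bsub>G\<^esub> w = z then a2 y * b w else 0) else 0)"
    by (rule gr_mult_expand[OF fA fB]) (use assms in \<open>auto simp: gr_elem_def\<close>)
  have e3: "gr_mult G (\<lambda>z. a1 z + a2 z) b z = (if z \<in> carrier G then
     (\<Sum>y\<in>?A. \<Sum>w\<in>?B. if y \<otimes>\<^bsub>G\<^esub> w = z then (a1 y + a2 y) * b w else 0) else 0)"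
    by (rule gr_mult_expand[OF fA fB]) (use assms in \<open>auto simp: gr_elem_def\<close>)
  have r: "\<And>y w. (if y \<otimes>\<^bsub>G\<^esub> w = z then (a1 y + a2 y) * b w else 0) =
     (if y \<otimes>\<^bsub>G\<^esub> w = z then a1 y * b w else 0) + (if y \<otimes>\<^bsub>G\<^esub> w = z then a2 y * b w else 0)"
    by (simp add: distrib_right)
  show "gr_mult G (\<lambda>z. a1 z + a2 z) b z = gr_mult G a1 b z + gr_mult G a2 b z"
    unfolding e1 e2 e3 r by (simp add: sum.distrib)
qed

lemma gm_add_right:
  fixes a b1 b2 :: "'g \<Rightarrow> 'f::ring_1"
  assumes "gr_elem G a" "gr_elem G b1" "gr_elem G b2"
  shows "gr_mult G a (\<lambda>z. b1 z + b2 z) = (\<lambda>z. gr_mult G a b1 z + gr_mult G a b2 z)"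
proof
  fix z
  let ?B = "{x\<in>carrier G. b1 x \<noteq> 0} \<union> {x\<in>carrier G. b2 x \<noteq> 0}"
  let ?A = "{x\<in>carrier G. a x \<noteq> 0}"
  have fA: "finite ?A" and fB: "finite ?B" using assms gr_elem_supp by blast+
  have e1: "gr_mult G a b1 z = (if z \<in> carrier G then
     (\<Sum>y\<in>?A. \<Sum>w\<in>?B. if y \<otimes>\<^bsub>G\<^esub> w = z then a y * b1 w else 0) else 0)"
    by (rule gr_mult_expand[OF fA fB]) (use assms in \<open>auto simp: gr_elem_def\<close>)
  have e2: "gr_mult G a b2 z = (if z \<in> carrier G then
     (\<Sum>y\<in>?A. \<Sum>w\<in>?B. if y \<otimes>\<^bsub>G\<^esub> w = z then a y * b2 w else 0) else 0)"
    by (rule gr_mult_expand[OF fA fB]) (use assms in \<open>auto simp: gr_elem_def\<close>)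
  have e3: "gr_mult G a (\<lambda>z. b1 z + b2 z) z = (if z \<in> carrier G then
     (\<Sum>y\<in>?A. \<Sum>w\<in>?B. if y \<otimes>\<^bsub>G\<^esub> w = z then a y * (b1 w + b2 w) else 0) else 0)"
    by (rule gr_mult_expand[OF fA fB]) (use assms in \<open>auto simp: gr_elem_def\<close>)
  have r: "\<And>y w. (if y \<otimes>\<^bsub>G\<^esub> w = z then a y * (b1 w + b2 w) else 0) =
     (if y \<otimes>\<^bsub>G\<^esub> w = z then a y * b1 w else 0) + (if y \<otimes>\<^bsub>G\<^esub> w = z then a y * b2 w else 0)"
    by (simp add: distrib_left)
  show "gr_mult G a (\<lambda>z. b1 z + b2 z) z = gr_mult G a b1 z + gr_mult G a b2 z"
    unfolding e1 e2 e3 r by (simp add: sum.distrib)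
qed

lemma gr_elem_sc: "x \<in> carrier G \<Longrightarrow> gr_elem G (sc c x)"
  unfolding gr_elem_def sc_def
  by (auto intro: finite_subset[of _ "{x}"])

lemma gr_elem_add:
  fixes a b :: "'g \<Rightarrow> 'f::ring_1"
  assumes "gr_elem G a" "gr_elem G b" shows "gr_elem G (\<lambda>z. a z + b z)"
proof -
  have "{x\<in>carrier G. a x + b x \<noteq> 0} \<subseteq> {x\<in>carrier G. a x \<noteq> 0} \<union> {x\<in>carrier G. b x \<noteq> 0}" by auto
  then show ?thesis using assms unfolding gr_elem_def by (auto intro: finite_subset)
qed

lemma gm_sc:
  fixes c d :: "'f::ring_1"
  assumes "monoid G" "x \<in> carrier G" "y \<in> carrier G"
  shows "gr_mult G (sc c x) (sc d y) = sc (c * d) (x \<otimes>\<^bsub>G\<^esub> y)"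
proof
  fix z
  have "gr_mult G (sc c x) (sc d y) z = (if z \<in> carrier G then
     (\<Sum>y'\<in>{x}. \<Sum>w\<in>{y}. if y' \<otimes>\<^bsub>G\<^esub> w = z then sc c x y' * sc d y w else 0) else 0)"
    by (rule gr_mult_expand) (use assms in \<open>auto simp: sc_def split: if_splits\<close>)
  then show "gr_mult G (sc c x) (sc d y) z = sc (c * d) (x \<otimes>\<^bsub>G\<^esub> y) z"
    using assms by (auto simp: sc_def monoid.m_closed)
qed

lemma oi_add: "oriented_inv G s \<sigma> (\<lambda>z. a z + b z) = (\<lambda>z. oriented_inv G s \<sigma> a z + oriented_inv G s \<sigma> b z)"
  by (auto simp: oriented_inv_def distrib_left)

lemma oi_sc:
  assumes "group_involution G s" "x \<in> carrier G"
  shows "oriented_inv G s \<sigma> (sc c x) = sc (of_int (\<sigma> x) * c) (s x)"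
proof
  fix z
  have inv: "\<And>u. u \<in> carrier G \<Longrightarrow> s u \<in> carrier G \<and> s (s u) = u"
    using assms(1) unfolding group_involution_def by auto
  show "oriented_inv G s \<sigma> (sc c x) z = sc (of_int (\<sigma> x) * c) (s x) z"
  proof (cases "z \<in> carrier G")
    case True
    have iff: "s z = x \<longleftrightarrow> z = s x"
    proof
      assume "s z = x" then have "s (s z) = s x" by simp
      then show "z = s x" using inv[OF True] by simp
    next
      assume "z = s x" then show "s z = x" using inv[OF assms(2)] by simp
    qed
    show ?thesis using True inv[OF assms(2)] unfolding oriented_inv_def sc_def iff by simp
  next
    case False
    then have "z \<noteq> s x" using inv[OF assms(2)] by blast
    then show ?thesis using False unfolding oriented_inv_def sc_def by simp
  qed
qed

lemma lin4:
  fixes a b c d a' b' c' d' :: "'f::ab_group_add"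
  assumes "a + b + (c + d) = a' + b' + (c' + d')" "a = a'" "d = d'"
  shows "b + c = b' + c'"
proof -
  from assms(1) have "a + b + (c + d) - a - d = a' + b' + (c' + d') - a' - d'" unfolding assms(2,3) by simp
  then show ?thesis by (simp add: algebra_simps)
qed

lemma gi_closed: assumes "group_involution G s" "x \<in> carrier G" shows "s x \<in> carrier G"
  using assms(1)[unfolded group_involution_def, THEN conjunct1] assms(2) by (rule bspec)
lemma gi_mult: assumes "group_involution G s" "x \<in> carrier G" "y \<in> carrier G"
  shows "s (x \<otimes>\<^bsub>G\<^esub> y) = s y \<otimes>\<^bsub>G\<^esub> s x"
proof -
  note h = assms(1)[unfolded group_involution_def, THEN conjunct2, THEN conjunct1]
  show ?thesis using bspec[OF bspec[OF h assms(2)] assms(3)] .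
qed
lemma gi_inv: assumes "group_involution G s" "x \<in> carrier G" shows "s (s x) = x"
  using assms(1)[unfolded group_involution_def, THEN conjunct2, THEN conjunct2] assms(2) by (rule bspec)

lemma normal_E:
  fixes G :: "('g,'m) monoid_scheme" and s :: "'g \<Rightarrow> 'g" and \<sigma> :: "'g \<Rightarrow> int"
  assumes "group G" "group_involution G s" "gr_normal G s \<sigma> TYPE('f::ring_1)"
    "x \<in> carrier G" "y \<in> carrier G"
  shows "sc (of_int (\<sigma> y)) (x \<otimes>\<^bsub>G\<^esub> s y) z + sc (of_int (\<sigma> x)) (y \<otimes>\<^bsub>G\<^esub> s x) z
       = sc (of_int (\<sigma> x)) (s x \<otimes>\<^bsub>G\<^esub> y) z + sc (of_int (\<sigma> y) :: 'f) (s y \<otimes>\<^bsub>G\<^esub> x) z"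
proof -
  have m: "monoid G" using assms(1) by (rule group.is_monoid)
  have sx: "s x \<in> carrier G" and sy: "s y \<in> carrier G"
    using gi_closed[OF assms(2)] assms(4,5) by blast+
  have nor: "\<And>a :: 'g \<Rightarrow> 'f. gr_elem G a \<Longrightarrow>
        gr_mult G a (oriented_inv G s \<sigma> a) = gr_mult G (oriented_inv G s \<sigma> a) a"
    using spec[OF assms(3)[unfolded gr_normal_def]] by (rule mp)
  have ex: "gr_elem G (sc (1::'f) x)" "gr_elem G (sc (1::'f) y)"
    "gr_elem G (sc (of_int (\<sigma> x) :: 'f) (s x))" "gr_elem G (sc (of_int (\<sigma> y) :: 'f) (s y))"
    by (simp_all add: gr_elem_sc assms(4,5) sx sy)
  have oix: "oriented_inv G s \<sigma> (sc (1::'f) x) = sc (of_int (\<sigma> x)) (s x)"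
    using oi_sc[OF assms(2,4), of \<sigma> "1::'f"] by simp
  have oiy: "oriented_inv G s \<sigma> (sc (1::'f) y) = sc (of_int (\<sigma> y)) (s y)"
    using oi_sc[OF assms(2,5), of \<sigma> "1::'f"] by simp
  have N1: "sc (of_int (\<sigma> x) :: 'f) (x \<otimes>\<^bsub>G\<^esub> s x) z = sc (of_int (\<sigma> x)) (s x \<otimes>\<^bsub>G\<^esub> x) z"
    using fun_cong[OF nor[OF ex(1)], of z] unfolding oix
    by (simp add: gm_sc[OF m assms(4) sx] gm_sc[OF m sx assms(4)])
  have N2: "sc (of_int (\<sigma> y) :: 'f) (y \<otimes>\<^bsub>G\<^esub> s y) z = sc (of_int (\<sigma> y)) (s y \<otimes>\<^bsub>G\<^esub> y) z"
    using fun_cong[OF nor[OF ex(2)], of z] unfolding oiy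
    by (simp add: gm_sc[OF m assms(5) sy] gm_sc[OF m sy assms(5)])
  let ?a = "\<lambda>z. sc (1::'f) x z + sc 1 y z"
  have oia: "oriented_inv G s \<sigma> ?a = (\<lambda>z. sc (of_int (\<sigma> x)) (s x) z + sc (of_int (\<sigma> y)) (s y) z)"
    unfolding oi_add oix oiy ..
  have ea: "gr_elem G ?a" by (rule gr_elem_add[OF ex(1,2)])
  have eb: "gr_elem G (\<lambda>z. sc (of_int (\<sigma> x) :: 'f) (s x) z + sc (of_int (\<sigma> y)) (s y) z)"
    by (rule gr_elem_add[OF ex(3,4)])
  note N3 = fun_cong[OF nor[OF ea], of z]
  have L: "gr_mult G ?a (oriented_inv G s \<sigma> ?a) z =
     sc (of_int (\<sigma> x)) (x \<otimes>\<^bsub>G\<^esub> s x) z + sc (of_int (\<sigma> y)) (x \<otimes>\<^bsub>G\<^esub> s y) z +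
     (sc (of_int (\<sigma> x)) (y \<otimes>\<^bsub>G\<^esub> s x) z + sc (of_int (\<sigma> y)) (y \<otimes>\<^bsub>G\<^esub> s y) z)"
    unfolding oia gm_add_left[OF ex(1,2) eb] gm_add_right[OF ex(1) ex(3,4)] gm_add_right[OF ex(2) ex(3,4)]
    by (simp add: gm_sc[OF m assms(4) sx] gm_sc[OF m assms(4) sy] gm_sc[OF m assms(5) sx] gm_sc[OF m assms(5) sy])
  have R: "gr_mult G (oriented_inv G s \<sigma> ?a) ?a z =
     sc (of_int (\<sigma> x)) (s x \<otimes>\<^bsub>G\<^esub> x) z + sc (of_int (\<sigma> x)) (s x \<otimes>\<^bsub>G\<^esub> y) z +
     (sc (of_int (\<sigma> y)) (s y \<otimes>\<^bsub>G\<^esub> x) z + sc (of_int (\<sigma> y)) (s y \<otimes>\<^bsub>G\<^esub> y) z)"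
    unfolding oia gm_add_left[OF ex(3,4) ea] gm_add_right[OF ex(3) ex(1,2)] gm_add_right[OF ex(4) ex(1,2)]
    by (simp add: gm_sc[OF m sx assms(4)] gm_sc[OF m sy assms(4)] gm_sc[OF m sx assms(5)] gm_sc[OF m sy assms(5)])
  show ?thesis by (rule lin4[OF N3[unfolded L R] N1 N2])
qed

lemma factF:
  fixes G :: "('g,'m) monoid_scheme" and s :: "'g \<Rightarrow> 'g" and \<sigma> :: "'g \<Rightarrow> int"
  assumes grp: "group G" and two: "(2::'f::field) \<noteq> 0" and gi: "group_involution G s"
    and ori: "orientation G \<sigma>" and N: "\<forall>g\<in>carrier G. \<sigma> (g \<otimes>\<^bsub>G\<^esub> s g) = 1"
    and nor: "gr_normal G s \<sigma> TYPE('f)"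
    and g: "g \<in> carrier G" and h: "h \<in> carrier G" and nc: "g \<otimes>\<^bsub>G\<^esub> h \<noteq> h \<otimes>\<^bsub>G\<^esub> g"
  shows "(\<sigma> g = \<sigma> h \<longrightarrow> s (g \<otimes>\<^bsub>G\<^esub> h) = h \<otimes>\<^bsub>G\<^esub> g) \<and>
         (\<sigma> g \<noteq> \<sigma> h \<longrightarrow> s (g \<otimes>\<^bsub>G\<^esub> h) = g \<otimes>\<^bsub>G\<^esub> h)"
proof -
  have sh: "s h \<in> carrier G" using gi_closed[OF gi h] .
  have ssh: "s (s h) = h" using gi_inv[OF gi h] .
  have sv: "\<And>x. x \<in> carrier G \<Longrightarrow> \<sigma> x = 1 \<or> \<sigma> x = -1" using ori unfolding orientation_def by blast
  have sm: "\<And>x y. x \<in> carrier G \<Longrightarrow> y \<in> carrier G \<Longrightarrow> \<sigma> (x \<otimes>\<^bsub>G\<^esub> y) = \<sigma> x * \<sigma> y"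
    using ori unfolding orientation_def by blast
  have "\<sigma> h * \<sigma> (s h) = 1" using N h sm[OF h sh] by simp
  then have sigh: "\<sigma> (s h) = \<sigma> h" using sv[OF h] sv[OF sh] by auto
  let ?u = "g \<otimes>\<^bsub>G\<^esub> h"
  have m1: "s h \<otimes>\<^bsub>G\<^esub> s g = s ?u" using gi_mult[OF gi g h] by simp
  have m2: "s g \<otimes>\<^bsub>G\<^esub> s h = s (h \<otimes>\<^bsub>G\<^esub> g)" using gi_mult[OF gi h g] by simp
  have E: "sc (of_int (\<sigma> (s h))) (g \<otimes>\<^bsub>G\<^esub> s (s h)) ?u + sc (of_int (\<sigma> g)) (s h \<otimes>\<^bsub>G\<^esub> s g) ?u
       = sc (of_int (\<sigma> g)) (s g \<otimes>\<^bsub>G\<^esub> s h) ?u + sc (of_int (\<sigma> (s h)) :: 'f) (s (s h) \<otimes>\<^bsub>G\<^esub> g) ?u"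
    by (rule normal_E[OF grp gi nor g sh])
  have eq: "of_int (\<sigma> h) + (if ?u = s ?u then of_int (\<sigma> g) else 0)
          = (if ?u = s (h \<otimes>\<^bsub>G\<^esub> g) then of_int (\<sigma> g) else (0::'f))"
    using E nc unfolding m1 m2 ssh sigh sc_def by simp
  have f1: "(1::'f) \<noteq> -1" using two by (metis add_eq_0_iff_both_eq_0 add_uminus_conv_diff eq_neg_iff_add_eq_0 one_add_one)
  have f2: "(1::'f) + 1 \<noteq> 0" using two by simp
  have f3: "-(1::'f) + - 1 \<noteq> 0" using two by (metis add_uminus_conv_diff diff_minus_eq_add minus_add_distrib neg_equal_0_iff_equal one_add_one)
  have f4: "(-1::'f) \<noteq> 0" by simp
  have A: "\<sigma> g = \<sigma> h \<Longrightarrow> ?u = s (h \<otimes>\<^bsub>G\<^esub> g)"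
  proof (rule ccontr)
    assume a: "\<sigma> g = \<sigma> h" "?u \<noteq> s (h \<otimes>\<^bsub>G\<^esub> g)"
    show False using eq a sv[OF g] f2 f3 by (auto split: if_splits)
  qed
  have B: "\<sigma> g \<noteq> \<sigma> h \<Longrightarrow> ?u = s ?u"
  proof (rule ccontr)
    assume a: "\<sigma> g \<noteq> \<sigma> h" "?u \<noteq> s ?u"
    show False using eq a sv[OF g] sv[OF h] f1 f4 by (auto split: if_splits)
  qed
  have hg: "h \<otimes>\<^bsub>G\<^esub> g \<in> carrier G" using grp g h by (simp add: group.is_monoid monoid.m_closed)
  show ?thesis using A B gi_inv[OF gi hg] by auto
qed


theorem lemma7:
  fixes G :: "('g,'m) monoid_scheme" and s :: "'g \<Rightarrow> 'g" and \<sigma> :: "'g \<Rightarrow> int"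
  assumes "group G"
    and "infinite (UNIV :: 'f::field set)"
    and "(2::'f) \<noteq> 0"
    and "group_involution G s"
    and "orientation G \<sigma>"
    and "\<exists>x\<in>carrier G. \<sigma> x = -1"
    and "\<forall>g\<in>carrier G. \<sigma> (g \<otimes>\<^bsub>G\<^esub> s g) = 1"
    and "gr_normal G s \<sigma> TYPE('f)"
  shows "(\<forall>g\<in>carrier G. \<forall>h\<in>carrier G. g \<otimes>\<^bsub>G\<^esub> h \<noteq> h \<otimes>\<^bsub>G\<^esub> g \<longrightarrow>
            (((\<sigma> g = 1 \<and> \<sigma> h = 1) \<or> (\<sigma> g = -1 \<and> \<sigma> h = 1)) \<longrightarrow>
               g \<otimes>\<^bsub>G\<^esub> g \<otimes>\<^bsub>G\<^esub> h = h \<otimes>\<^bsub>G\<^esub> (g \<otimes>\<^bsub>G\<^esub> g)) \<and>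
            (((\<sigma> g = 1 \<and> \<sigma> h = -1) \<or> (\<sigma> g = -1 \<and> \<sigma> h = -1)) \<longrightarrow>
               g \<otimes>\<^bsub>G\<^esub> g \<otimes>\<^bsub>G\<^esub> h = s (g \<otimes>\<^bsub>G\<^esub> g \<otimes>\<^bsub>G\<^esub> h)))
       \<and> (\<forall>m\<in>{x\<in>carrier G. \<sigma> x = 1}. \<forall>n\<in>{x\<in>carrier G. \<sigma> x = 1}.
            inv\<^bsub>G\<^esub> (m \<otimes>\<^bsub>G\<^esub> m) \<otimes>\<^bsub>G\<^esub> inv\<^bsub>G\<^esub> n \<otimes>\<^bsub>G\<^esub> (m \<otimes>\<^bsub>G\<^esub> m) \<otimes>\<^bsub>G\<^esub> n = \<one>\<^bsub>G\<^esub>)"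
proof -
  interpret group G by fact
  note F = factF[OF assms(1,3,4,5,7,8)]
  have sv: "\<And>x. x \<in> carrier G \<Longrightarrow> \<sigma> x = 1 \<or> \<sigma> x = -1" using assms(5) unfolding orientation_def by blast
  have sm: "\<And>x y. x \<in> carrier G \<Longrightarrow> y \<in> carrier G \<Longrightarrow> \<sigma> (x \<otimes>\<^bsub>G\<^esub> y) = \<sigma> x * \<sigma> y"
    using assms(5) unfolding orientation_def by blast
  have P: "\<forall>g\<in>carrier G. \<forall>h\<in>carrier G. g \<otimes>\<^bsub>G\<^esub> h \<noteq> h \<otimes>\<^bsub>G\<^esub> g \<longrightarrow>
            (((\<sigma> g = 1 \<and> \<sigma> h = 1) \<or> (\<sigma> g = -1 \<and> \<sigma> h = 1)) \<longrightarrow>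
               g \<otimes>\<^bsub>G\<^esub> g \<otimes>\<^bsub>G\<^esub> h = h \<otimes>\<^bsub>G\<^esub> (g \<otimes>\<^bsub>G\<^esub> g)) \<and>
            (((\<sigma> g = 1 \<and> \<sigma> h = -1) \<or> (\<sigma> g = -1 \<and> \<sigma> h = -1)) \<longrightarrow>
               g \<otimes>\<^bsub>G\<^esub> g \<otimes>\<^bsub>G\<^esub> h = s (g \<otimes>\<^bsub>G\<^esub> g \<otimes>\<^bsub>G\<^esub> h))"
  proof (intro ballI impI)
    fix g h assume g: "g \<in> carrier G" and h: "h \<in> carrier G" and nc: "g \<otimes>\<^bsub>G\<^esub> h \<noteq> h \<otimes>\<^bsub>G\<^esub> g"
    have gg: "\<sigma> (g \<otimes>\<^bsub>G\<^esub> g) = 1" using sm[OF g g] sv[OF g] by auto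
    have ggc: "g \<otimes>\<^bsub>G\<^esub> g \<in> carrier G" "g \<otimes>\<^bsub>G\<^esub> h \<in> carrier G" "h \<otimes>\<^bsub>G\<^esub> g \<in> carrier G" using g h by auto
    have nc2: "g \<otimes>\<^bsub>G\<^esub> (g \<otimes>\<^bsub>G\<^esub> h) \<noteq> (g \<otimes>\<^bsub>G\<^esub> h) \<otimes>\<^bsub>G\<^esub> g"
    proof
      assume "g \<otimes>\<^bsub>G\<^esub> (g \<otimes>\<^bsub>G\<^esub> h) = (g \<otimes>\<^bsub>G\<^esub> h) \<otimes>\<^bsub>G\<^esub> g"
      then have "g \<otimes>\<^bsub>G\<^esub> (g \<otimes>\<^bsub>G\<^esub> h) = g \<otimes>\<^bsub>G\<^esub> (h \<otimes>\<^bsub>G\<^esub> g)" using g h by (simp add: m_assoc)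
      then have "g \<otimes>\<^bsub>G\<^esub> h = h \<otimes>\<^bsub>G\<^esub> g" using g h ggc by simp
      then show False using nc by simp
    qed
    have sgh: "\<sigma> (g \<otimes>\<^bsub>G\<^esub> h) = \<sigma> g * \<sigma> h" using sm[OF g h] .
    have A1: "g \<otimes>\<^bsub>G\<^esub> g \<otimes>\<^bsub>G\<^esub> h = h \<otimes>\<^bsub>G\<^esub> (g \<otimes>\<^bsub>G\<^esub> g)" if sh1: "\<sigma> h = 1"
    proof (rule ccontr)
      assume ne: "g \<otimes>\<^bsub>G\<^esub> g \<otimes>\<^bsub>G\<^esub> h \<noteq> h \<otimes>\<^bsub>G\<^esub> (g \<otimes>\<^bsub>G\<^esub> g)"
      have e1: "s (g \<otimes>\<^bsub>G\<^esub> g \<otimes>\<^bsub>G\<^esub> h) = h \<otimes>\<^bsub>G\<^esub> (g \<otimes>\<^bsub>G\<^esub> g)" using F[OF ggc(1) h ne] gg sh1 by simp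
      have e2: "s (g \<otimes>\<^bsub>G\<^esub> (g \<otimes>\<^bsub>G\<^esub> h)) = (g \<otimes>\<^bsub>G\<^esub> h) \<otimes>\<^bsub>G\<^esub> g" using F[OF g ggc(2) nc2] sgh sh1 by simp
      have "h \<otimes>\<^bsub>G\<^esub> (g \<otimes>\<^bsub>G\<^esub> g) = (g \<otimes>\<^bsub>G\<^esub> h) \<otimes>\<^bsub>G\<^esub> g" using e1 e2 g h by (simp add: m_assoc)
      then have "(h \<otimes>\<^bsub>G\<^esub> g) \<otimes>\<^bsub>G\<^esub> g = (g \<otimes>\<^bsub>G\<^esub> h) \<otimes>\<^bsub>G\<^esub> g" using g h by (simp add: m_assoc)
      then have "h \<otimes>\<^bsub>G\<^esub> g = g \<otimes>\<^bsub>G\<^esub> h" using g ggc by simp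
      then show False using nc by simp
    qed
    have A2: "g \<otimes>\<^bsub>G\<^esub> g \<otimes>\<^bsub>G\<^esub> h = s (g \<otimes>\<^bsub>G\<^esub> g \<otimes>\<^bsub>G\<^esub> h)" if sh1: "\<sigma> h = -1"
    proof -
      have "\<sigma> g \<noteq> \<sigma> (g \<otimes>\<^bsub>G\<^esub> h)" using sgh sh1 sv[OF g] by auto
      then have "s (g \<otimes>\<^bsub>G\<^esub> (g \<otimes>\<^bsub>G\<^esub> h)) = g \<otimes>\<^bsub>G\<^esub> (g \<otimes>\<^bsub>G\<^esub> h)" using F[OF g ggc(2) nc2] by simp
      then show ?thesis using g h by (simp add: m_assoc)
    qed
    show "(((\<sigma> g = 1 \<and> \<sigma> h = 1) \<or> (\<sigma> g = -1 \<and> \<sigma> h = 1)) \<longrightarrow>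
               g \<otimes>\<^bsub>G\<^esub> g \<otimes>\<^bsub>G\<^esub> h = h \<otimes>\<^bsub>G\<^esub> (g \<otimes>\<^bsub>G\<^esub> g)) \<and>
            (((\<sigma> g = 1 \<and> \<sigma> h = -1) \<or> (\<sigma> g = -1 \<and> \<sigma> h = -1)) \<longrightarrow>
               g \<otimes>\<^bsub>G\<^esub> g \<otimes>\<^bsub>G\<^esub> h = s (g \<otimes>\<^bsub>G\<^esub> g \<otimes>\<^bsub>G\<^esub> h))"
      using A1 A2 by auto
  qed
  have Q: "inv\<^bsub>G\<^esub> (m \<otimes>\<^bsub>G\<^esub> m) \<otimes>\<^bsub>G\<^esub> inv\<^bsub>G\<^esub> n \<otimes>\<^bsub>G\<^esub> (m \<otimes>\<^bsub>G\<^esub> m) \<otimes>\<^bsub>G\<^esub> n = \<one>\<^bsub>G\<^esub>"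
    if m: "m \<in> {x\<in>carrier G. \<sigma> x = 1}" and n: "n \<in> {x\<in>carrier G. \<sigma> x = 1}" for m n
  proof -
    have mc: "m \<in> carrier G" and nc: "n \<in> carrier G" and sm1: "\<sigma> m = 1" and sn1: "\<sigma> n = 1"
      using m n by auto
    have mm: "m \<otimes>\<^bsub>G\<^esub> m \<in> carrier G" using mc by simp
    have com: "m \<otimes>\<^bsub>G\<^esub> m \<otimes>\<^bsub>G\<^esub> n = n \<otimes>\<^bsub>G\<^esub> (m \<otimes>\<^bsub>G\<^esub> m)"
    proof (cases "m \<otimes>\<^bsub>G\<^esub> n = n \<otimes>\<^bsub>G\<^esub> m")
      case True
      have "m \<otimes>\<^bsub>G\<^esub> m \<otimes>\<^bsub>G\<^esub> n = m \<otimes>\<^bsub>G\<^esub> (m \<otimes>\<^bsub>G\<^esub> n)" using mc nc by (simp add: m_assoc)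
      also have "\<dots> = m \<otimes>\<^bsub>G\<^esub> (n \<otimes>\<^bsub>G\<^esub> m)" using True by simp
      also have "\<dots> = (m \<otimes>\<^bsub>G\<^esub> n) \<otimes>\<^bsub>G\<^esub> m" using mc nc by (simp add: m_assoc)
      also have "\<dots> = (n \<otimes>\<^bsub>G\<^esub> m) \<otimes>\<^bsub>G\<^esub> m" using True by simp
      also have "\<dots> = n \<otimes>\<^bsub>G\<^esub> (m \<otimes>\<^bsub>G\<^esub> m)" using mc nc by (simp add: m_assoc)
      finally show ?thesis .
    next
      case False
      then show ?thesis using P mc nc sm1 sn1 by blast
    qed
    have "inv\<^bsub>G\<^esub> (m \<otimes>\<^bsub>G\<^esub> m) \<otimes>\<^bsub>G\<^esub> inv\<^bsub>G\<^esub> n \<otimes>\<^bsub>G\<^esub> (m \<otimes>\<^bsub>G\<^esub> m) \<otimes>\<^bsub>G\<^esub> n = inv\<^bsub>G\<^esub> (m \<otimes>\<^bsub>G\<^esub> m) \<otimes>\<^bsub>G\<^esub> inv\<^bsub>G\<^esub> n \<otimes>\<^bsub>G\<^esub> (m \<otimes>\<^bsub>G\<^esub> m \<otimes>\<^bsub>G\<^esub> n)"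
      using mm nc by (simp add: m_assoc)
    also have "\<dots> = inv\<^bsub>G\<^esub> (m \<otimes>\<^bsub>G\<^esub> m) \<otimes>\<^bsub>G\<^esub> inv\<^bsub>G\<^esub> n \<otimes>\<^bsub>G\<^esub> (n \<otimes>\<^bsub>G\<^esub> (m \<otimes>\<^bsub>G\<^esub> m))" using com by simp
    also have "\<dots> = inv\<^bsub>G\<^esub> (m \<otimes>\<^bsub>G\<^esub> m) \<otimes>\<^bsub>G\<^esub> (inv\<^bsub>G\<^esub> n \<otimes>\<^bsub>G\<^esub> (n \<otimes>\<^bsub>G\<^esub> (m \<otimes>\<^bsub>G\<^esub> m)))" using mm nc by (simp add: m_assoc)
    also have "inv\<^bsub>G\<^esub> n \<otimes>\<^bsub>G\<^esub> (n \<otimes>\<^bsub>G\<^esub> (m \<otimes>\<^bsub>G\<^esub> m)) = m \<otimes>\<^bsub>G\<^esub> m" using mm nc by (simp add: m_assoc[symmetric])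
    also have "inv\<^bsub>G\<^esub> (m \<otimes>\<^bsub>G\<^esub> m) \<otimes>\<^bsub>G\<^esub> (m \<otimes>\<^bsub>G\<^esub> m) = \<one>\<^bsub>G\<^esub>" using mm by simp
    finally show ?thesis .
  qed
  show ?thesis using P Q by blast
qed

end
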